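(* (Euler's Homogeneous Theorem) Let $f$ be a function on the Cartesian $\mathbb Z_2^n$-manifold $\mathbb R^{p|\mathbf q}$ which is $\nabla^{p|\mathbf q}$-homogeneous of weight $1$, i.e. $\nabla^{p|\mathbf q}(f)=f$, where $\nabla^{p|\mathbf q}=\sum_a x^a\partial_{x^a}+\sum_\alpha\xi^\alpha\partial_{\xi^\alpha}$. Then there exist real numbers $F_a,G_\alpha\in\mathbb R$ such that $f=\sum_aF_ax^a+\sum_\alpha G_\alpha\xi^\alpha$.
   Context: Fix $n\ge 1$. The Cartesian $\mathbb Z_2^n$-manifold of dimension $p|\mathbf q$, $\mathbf q=(q_1,\dots,q_{2^n-1})$, is $\mathbb R^{p|\mathbf q}=(\mathbb R^p,C^\infty_{\mathbb R^p}[[\xi]])$, where $x^a$ are the standard linear coordinates on $\mathbb R^p$ (degree $0$) and $\xi^\alpha$ are formal coordinates, $q_i$ of them of the $i$-th non-zero degree in $\mathbb Z_2^n$, with $\xi^\alpha\xi^\beta=(-1)^{\langle\deg\xi^\alpha,\deg\xi^\beta\rangle}\xi^\beta\xi^\alpha$ ($\langle\cdot,\cdot\rangle$ the dot product mod 2; variables with odd self-pairing square to zero, the others generate formal power series). Functions on $\mathbb R^{p|\mathbf q}$ are global sections $f=\sum_{\boldsymbol\alpha}\xi^{\boldsymbol\alpha}f_{\boldsymbol\alpha}(x)$ (multi-index notation, $f_{\boldsymbol\alpha}$ smooth on $\mathbb R^p$). $\partial_{x^a}$ is the usual partial derivative acting on coefficients; $\partial_{\xi^\alpha}$ is the graded derivation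 with $\partial_{\xi^\alpha}\xi^\beta=\delta^\beta_\alpha$, extended by the graded Leibniz rule with signs $(-1)^{\langle\deg\xi^\alpha,\cdot\rangle}$. *)

theory Defs
  imports "HOL-Analysis.Analysis"
begin

text \<open>The even coordinates x^a are indexed by a finite
  type 'p (points are real^'p).  The formal coordinates are xi^0,...,xi^(N-1); each xi^b has
  degree dg b, a nonzero element of Z_2^n encoded as a nonempty subset of {..<n}
  (the set of positions where the bit is 1).  The numbers q_i are the multiplicities of
  the nonzero degrees among dg 0, ..., dg (N-1).\<close>

definition zpair :: "nat set \<Rightarrow> nat set \<Rightarrow> nat" where
  "zpair u v = card (u \<inter> v) mod 2"

definition valid_mi :: "nat \<Rightarrow> (nat \<Rightarrow> nat set) \<Rightarrow> (nat \<Rightarrow> nat) \<Rightarrow> bool" where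
  "valid_mi N dg al \<longleftrightarrow> (\<forall>g\<ge>N. al g = 0) \<and> (\<forall>g<N. zpair (dg g) (dg g) = 1 \<longrightarrow> al g \<le> 1)"

definition unit_mi :: "nat \<Rightarrow> nat \<Rightarrow> nat" where
  "unit_mi b = (\<lambda>g. if g = b then 1 else 0)"

text \<open>Sign obtained by moving xi^b past the monomial prod_{g<b} (xi^g)^(al g).\<close>
definition msign :: "(nat \<Rightarrow> nat set) \<Rightarrow> nat \<Rightarrow> (nat \<Rightarrow> nat) \<Rightarrow> real" where
  "msign dg b al = (-1) ^ (\<Sum>g<b. al g * zpair (dg b) (dg g))"

definition pdiff :: "'p::finite \<Rightarrow> (real^'p \<Rightarrow> real) \<Rightarrow> real^'p \<Rightarrow> real" where
  "pdiff a g = (\<lambda>x. deriv (\<lambda>t. g (x + t *\<^sub>R axis a 1)) 0)"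

fun pdiffs :: "'p::finite list \<Rightarrow> (real^'p \<Rightarrow> real) \<Rightarrow> real^'p \<Rightarrow> real" where
  "pdiffs [] g = g"
| "pdiffs (a # as) g = pdiff a (pdiffs as g)"

definition smooth_fn :: "(real^'p::finite \<Rightarrow> real) \<Rightarrow> bool" where
  "smooth_fn g \<longleftrightarrow> (\<forall>as. continuous_on UNIV (pdiffs as g) \<and>
      (\<forall>a x. (\<lambda>t. pdiffs as g (x + t *\<^sub>R axis a 1)) differentiable (at 0)))"

text \<open>A function f = sum_al xi^al f_al(x) on R^{p|q} is represented by its coefficient family
  al \<mapsto> f_al; coefficients at non-admissible multi-indices are 0.\<close>
type_synonym 'p sfun = "(nat \<Rightarrow> nat) \<Rightarrow> real^'p \<Rightarrow> real"

definition is_fun :: "nat \<Rightarrow> (nat \<Rightarrow> nat set) \<Rightarrow> 'p::finite sfun \<Rightarrow> bool" where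
  "is_fun N dg f \<longleftrightarrow> (\<forall>al. if valid_mi N dg al then smooth_fn (f al) else f al = (\<lambda>x. 0))"

definition sadd :: "'p::finite sfun \<Rightarrow> 'p sfun \<Rightarrow> 'p sfun" where
  "sadd f g = (\<lambda>al x. f al x + g al x)"

definition d_x :: "'p::finite \<Rightarrow> 'p sfun \<Rightarrow> 'p sfun" where
  "d_x a f = (\<lambda>al. pdiff a (f al))"

definition mul_x :: "'p::finite \<Rightarrow> 'p sfun \<Rightarrow> 'p sfun" where
  "mul_x a f = (\<lambda>al x. x $ a * f al x)"

text \<open>partial_{xi^b}: d/dxi^b (xi^(al+e_b)) = msign * (al b + 1) * xi^al\<close>
definition d_xi :: "nat \<Rightarrow> (nat \<Rightarrow> nat set) \<Rightarrow> nat \<Rightarrow> 'p::finite sfun \<Rightarrow> 'p sfun" where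
  "d_xi N dg b f = (\<lambda>al x. if b < N \<and> valid_mi N dg al \<and> valid_mi N dg (\<lambda>g. al g + unit_mi b g)
      then msign dg b al * real (al b + 1) * f (\<lambda>g. al g + unit_mi b g) x else 0)"

text \<open>left multiplication by xi^b: xi^b * xi^al' = msign * xi^(al'+e_b) (0 if not admissible)\<close>
definition mul_xi :: "nat \<Rightarrow> (nat \<Rightarrow> nat set) \<Rightarrow> nat \<Rightarrow> 'p::finite sfun \<Rightarrow> 'p sfun" where
  "mul_xi N dg b f = (\<lambda>al x. if b < N \<and> valid_mi N dg al \<and> 1 \<le> al b
      then msign dg b (\<lambda>g. al g - unit_mi b g) * f (\<lambda>g. al g - unit_mi b g) x else 0)"

definition euler :: "nat \<Rightarrow> (nat \<Rightarrow> nat set) \<Rightarrow> 'p::finite sfun \<Rightarrow> 'p sfun" where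
  "euler N dg f = (\<lambda>al x. (\<Sum>a\<in>UNIV. mul_x a (d_x a f) al x)
                         + (\<Sum>b<N. mul_xi N dg b (d_xi N dg b f) al x))"

definition coord_x :: "'p::finite \<Rightarrow> 'p sfun" where
  "coord_x a = (\<lambda>al x. if al = (\<lambda>_. 0) then x $ a else 0)"

definition coord_xi :: "nat \<Rightarrow> 'p::finite sfun" where
  "coord_xi b = (\<lambda>al x. if al = unit_mi b then 1 else 0)"

end

theory Submission
  imports Defs
begin


lemma pdiff_DERIV:
  fixes g :: "real^'p::finite \<Rightarrow> real"
  assumes "\<And>a y. (\<lambda>t. g (y + t *\<^sub>R axis a 1)) differentiable (at 0)"
  shows "DERIV (\<lambda>t. g (y + t *\<^sub>R axis a 1)) s :> pdiff a g (y + s *\<^sub>R axis a 1)"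
proof -
  have "DERIV (\<lambda>t. g ((y + s *\<^sub>R axis a 1) + t *\<^sub>R axis a 1)) 0 :> pdiff a g (y + s *\<^sub>R axis a 1)"
    unfolding pdiff_def using assms DERIV_deriv_iff_real_differentiable by blast
  moreover have "(\<lambda>t. g ((y + s *\<^sub>R axis a 1) + t *\<^sub>R axis a 1)) = (\<lambda>t. (\<lambda>t. g (y + t *\<^sub>R axis a 1)) (t + s))"
    by (auto simp: algebra_simps)
  ultimately show ?thesis using DERIV_shift[of "\<lambda>t. g (y + t *\<^sub>R axis a 1)" _ 0 s] by simp
qed

lemma mvt_any:
  fixes \<phi> :: "real \<Rightarrow> real"
  assumes "\<And>s. DERIV \<phi> s :> \<phi>' s"
  shows "\<exists>\<theta>. \<bar>\<theta>\<bar> \<le> \<bar>s\<bar> \<and> \<phi> s - \<phi> 0 = s * \<phi>' \<theta>"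
proof -
  have cont: "continuous_on A \<phi>" for A
    using assms by (meson DERIV_continuous continuous_at_imp_continuous_on)
  have dif: "\<phi> differentiable (at x)" for x using assms real_differentiable_def by blast
  consider "s = 0" | "s > 0" | "s < 0" by linarith
  then show ?thesis
  proof cases
    case 1 then show ?thesis by (intro exI[of _ 0]) auto
  next
    case 2
    from MVT[OF 2 cont dif] obtain l z where "0 < z" "z < s" "DERIV \<phi> z :> l" "\<phi> s - \<phi> 0 = (s - 0) * l"
      by blast
    moreover have "l = \<phi>' z" using DERIV_unique assms \<open>DERIV \<phi> z :> l\<close> by blast
    ultimately show ?thesis by (intro exI[of _ z]) auto
  next
    case 3
    from MVT[OF 3 cont dif] obtain l z where "s < z" "z < 0" "DERIV \<phi> z :> l" "\<phi> 0 - \<phi> s = (0 - s) * l"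
      by blast
    moreover have "l = \<phi>' z" using DERIV_unique assms \<open>DERIV \<phi> z :> l\<close> by blast
    ultimately show ?thesis by (intro exI[of _ z]) (auto simp: algebra_simps)
  qed
qed

lemma partial_approx:
  fixes g :: "real^'p::finite \<Rightarrow> real"
  assumes dif: "\<And>a y. (\<lambda>t. g (y + t *\<^sub>R axis a 1)) differentiable (at 0)"
    and cont: "\<And>a. continuous_on UNIV (pdiff a g)"
    and fin: "finite S"
  shows "\<forall>e>0. \<exists>d>0. \<forall>h. (\<forall>b. b \<notin> S \<longrightarrow> h$b = 0) \<and> norm h < d \<longrightarrow>
            \<bar>g (x + h) - g x - (\<Sum>b\<in>S. h$b * pdiff b g x)\<bar> \<le> e * norm h"
  using fin
proof (induction S rule: finite_induct)
  case empty
  show ?case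
  proof (intro allI impI)
    fix e :: real assume "e > 0"
    show "\<exists>d>0. \<forall>h. (\<forall>b. b \<notin> {} \<longrightarrow> h$b = 0) \<and> norm h < d \<longrightarrow>
            \<bar>g (x + h) - g x - (\<Sum>b\<in>{}. h$b * pdiff b g x)\<bar> \<le> e * norm h"
    proof (intro exI[of _ 1] conjI allI impI)
      fix h :: "real^'p" assume "(\<forall>b. b \<notin> {} \<longrightarrow> h$b = 0) \<and> norm h < 1"
      then have "h = 0" by (simp add: vec_eq_iff)
      then show "\<bar>g (x + h) - g x - (\<Sum>b\<in>{}. h$b * pdiff b g x)\<bar> \<le> e * norm h" by simp
    qed simp
  qed
next
  case (insert a S)
  show ?case
  proof (intro allI impI)
    fix e :: real assume e: "e > 0"
    then have e2: "e/2 > 0" by simp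
    from insert.IH[rule_format, OF e2] obtain d1 where d1: "d1 > 0" and
      H1': "\<forall>h. (\<forall>b. b \<notin> S \<longrightarrow> h$b = 0) \<and> norm h < d1 \<longrightarrow>
            \<bar>g (x + h) - g x - (\<Sum>b\<in>S. h$b * pdiff b g x)\<bar> \<le> e/2 * norm h"
      by (elim exE conjE) (rule that)
    note H1 = H1'[rule_format, OF conjI]
    from cont[of a] e2 obtain d2 where d2: "d2 > 0" and
      H2: "\<And>y. dist y x < d2 \<Longrightarrow> dist (pdiff a g y) (pdiff a g x) < e/2"
      unfolding continuous_on_iff by blast
    show "\<exists>d>0. \<forall>h. (\<forall>b. b \<notin> insert a S \<longrightarrow> h$b = 0) \<and> norm h < d \<longrightarrow>
            \<bar>g (x + h) - g x - (\<Sum>b\<in>insert a S. h$b * pdiff b g x)\<bar> \<le> e * norm h"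
    proof (intro exI[of _ "min d1 d2"] conjI allI impI)
      show "min d1 d2 > 0" using d1 d2 by simp
      fix h :: "real^'p" assume hh: "(\<forall>b. b \<notin> insert a S \<longrightarrow> h$b = 0) \<and> norm h < min d1 d2"
      define h' where "h' = (\<chi> i. if i = a then 0 else h$i)"
      have hdec: "h = h' + (h$a) *\<^sub>R axis a 1"
        by (simp add: vec_eq_iff h'_def axis_def)
      have h'S: "\<forall>b. b \<notin> S \<longrightarrow> h'$b = 0" using hh by (simp add: h'_def)
      have nh': "norm h' \<le> norm h"
        by (rule norm_le_componentwise_cart) (simp add: h'_def)
      have A1: "\<bar>g (x + h') - g x - (\<Sum>b\<in>S. h'$b * pdiff b g x)\<bar> \<le> e/2 * norm h"
      proof -
        have "norm h' < d1" using nh' hh by linarith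
        then have "\<bar>g (x + h') - g x - (\<Sum>b\<in>S. h'$b * pdiff b g x)\<bar> \<le> e/2 * norm h'"
          using H1[OF h'S] by blast
        also have "\<dots> \<le> e/2 * norm h" using nh' e by (simp add: mult_left_mono)
        finally show ?thesis .
      qed
      obtain \<theta> where th: "\<bar>\<theta>\<bar> \<le> \<bar>h$a\<bar>" and
        mv: "g ((x + h') + (h$a) *\<^sub>R axis a 1) - g ((x + h') + 0 *\<^sub>R axis a 1)
              = h$a * pdiff a g ((x + h') + \<theta> *\<^sub>R axis a 1)"
        using mvt_any[of "\<lambda>t. g ((x + h') + t *\<^sub>R axis a 1)", OF pdiff_DERIV[OF dif], of "h$a"]
        by blast
      have "norm (h' + \<theta> *\<^sub>R axis a 1) \<le> norm h"
        by (rule norm_le_componentwise_cart) (use th in \<open>auto simp: h'_def axis_def\<close>)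
      then have "dist ((x + h') + \<theta> *\<^sub>R axis a 1) x < d2"
        using hh by (simp add: dist_norm algebra_simps)
      then have "\<bar>pdiff a g ((x + h') + \<theta> *\<^sub>R axis a 1) - pdiff a g x\<bar> < e/2"
        using H2 by (simp add: dist_real_def)
      then have "\<bar>h$a * (pdiff a g ((x + h') + \<theta> *\<^sub>R axis a 1) - pdiff a g x)\<bar> \<le> \<bar>h$a\<bar> * (e/2)"
        unfolding abs_mult by (intro mult_left_mono) auto
      also have "\<dots> \<le> norm h * (e/2)"
        using component_le_norm_cart[of h a] e by (simp add: mult_right_mono)
      finally have A2': "\<bar>h$a * (pdiff a g ((x + h') + \<theta> *\<^sub>R axis a 1) - pdiff a g x)\<bar> \<le> e/2 * norm h"
        by (simp add: algebra_simps)
      have "x + h = x + (h' + (h$a) *\<^sub>R axis a 1)" using hdec by metis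
      also have "\<dots> = (x + h') + (h$a) *\<^sub>R axis a 1" by (simp add: algebra_simps)
      finally have xh: "x + h = (x + h') + (h$a) *\<^sub>R axis a 1" .
      have "g (x + h) = g ((x + h') + (h$a) *\<^sub>R axis a 1)" by (simp only: xh)
      then have "g (x + h) = g (x + h') + h$a * pdiff a g ((x + h') + \<theta> *\<^sub>R axis a 1)"
        using mv by simp
      then have A2: "\<bar>g (x + h) - g (x + h') - h$a * pdiff a g x\<bar> \<le> e/2 * norm h"
        using A2' by (simp add: algebra_simps)
      have sumeq: "(\<Sum>b\<in>insert a S. h$b * pdiff b g x) = h$a * pdiff a g x + (\<Sum>b\<in>S. h'$b * pdiff b g x)"
        using insert.hyps by (auto simp: h'_def intro!: sum.cong)
      show "\<bar>g (x + h) - g x - (\<Sum>b\<in>insert a S. h$b * pdiff b g x)\<bar> \<le> e * norm h"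
        unfolding sumeq using A1 A2 by linarith
    qed
  qed
qed

lemma C1_has_derivative:
  fixes g :: "real^'p::finite \<Rightarrow> real"
  assumes dif: "\<And>a y. (\<lambda>t. g (y + t *\<^sub>R axis a 1)) differentiable (at 0)"
    and cont: "\<And>a. continuous_on UNIV (pdiff a g)"
  shows "(g has_derivative (\<lambda>h. \<Sum>b\<in>UNIV. h$b * pdiff b g x)) (at x)"
  unfolding has_derivative_at_alt
proof (intro conjI allI impI)
  show "bounded_linear (\<lambda>h. \<Sum>b\<in>UNIV. h$b * pdiff b g x)"
    by (intro bounded_linear_sum) (rule bounded_linear_compose[OF bounded_linear_mult_left bounded_linear_vec_nth])
  fix e :: real assume "e > 0"
  from partial_approx[OF dif cont, of UNIV x] \<open>e > 0\<close> obtain d where "d > 0" and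
    H: "\<And>h. norm h < d \<Longrightarrow> \<bar>g (x + h) - g x - (\<Sum>b\<in>UNIV. h$b * pdiff b g x)\<bar> \<le> e * norm h"
    by auto
  show "\<exists>d>0. \<forall>y. norm (y - x) < d \<longrightarrow>
      norm (g y - g x - (\<Sum>b\<in>UNIV. (y - x)$b * pdiff b g x)) \<le> e * norm (y - x)"
    using H[of "_ - x"] \<open>d > 0\<close> by (intro exI[of _ d]) auto
qed



lemma ray_deriv:
  fixes g :: "real^'p::finite \<Rightarrow> real"
  assumes dif: "\<And>a y. (\<lambda>t. g (y + t *\<^sub>R axis a 1)) differentiable (at 0)"
    and cont: "\<And>a. continuous_on UNIV (pdiff a g)"
  shows "DERIV (\<lambda>t. g (t *\<^sub>R x)) t :> (\<Sum>b\<in>UNIV. x$b * pdiff b g (t *\<^sub>R x))"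
proof -
  have "((\<lambda>t. g (t *\<^sub>R x)) has_derivative (\<lambda>d. \<Sum>b\<in>UNIV. (d *\<^sub>R x)$b * pdiff b g (t *\<^sub>R x))) (at t)"
    using has_derivative_compose[OF has_derivative_scaleR_left[OF has_derivative_ident] C1_has_derivative[OF dif cont]]
    by simp
  moreover have "(\<lambda>d. \<Sum>b\<in>UNIV. (d *\<^sub>R x)$b * pdiff b g (t *\<^sub>R x)) = (*) (\<Sum>b\<in>UNIV. x$b * pdiff b g (t *\<^sub>R x))"
    by (auto simp: sum_distrib_left algebra_simps)
  ultimately show ?thesis by (simp add: has_field_derivative_def)
qed

locale euler_pde =
  fixes g :: "real^'p::finite \<Rightarrow> real" and c :: real
  assumes dif: "\<And>a y. (\<lambda>t. g (y + t *\<^sub>R axis a 1)) differentiable (at 0)"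
    and cont: "\<And>a. continuous_on UNIV (pdiff a g)"
    and E: "\<And>y. (\<Sum>b\<in>UNIV. y$b * pdiff b g y) = c * g y"
begin

definition "H y t = g (t *\<^sub>R y)"
definition "H' y t = (\<Sum>b\<in>UNIV. y$b * pdiff b g (t *\<^sub>R y))"

lemma H_deriv: "DERIV (H y) t :> H' y t"
  unfolding H_def[abs_def] H'_def using ray_deriv[OF dif cont] by blast

lemma H_rel: "t * H' y t = c * H y t"
proof -
  have "t * H' y t = (\<Sum>b\<in>UNIV. (t *\<^sub>R y)$b * pdiff b g (t *\<^sub>R y))"
    by (simp add: H'_def sum_distrib_left algebra_simps)
  also have "\<dots> = c * H y t" using E[of "t *\<^sub>R y"] by (simp add: H_def)
  finally show ?thesis .
qed

lemma H_cont: "continuous_on A (H y)"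
  using H_deriv by (meson DERIV_continuous continuous_at_imp_continuous_on)

lemma H1: "H y 1 = g y" and H0: "H y 0 = g 0" by (simp_all add: H_def)

lemma neg_case:
  assumes "c = - real m" "m \<ge> 1"
  shows "g y = 0"
proof -
  define u where "u t = t^m * H y t" for t
  have "DERIV u t :> 0" for t
  proof -
    have d: "DERIV u t :> (real m * t^(m-1)) * H y t + t^m * H' y t"
      unfolding u_def[abs_def] by (auto intro!: derivative_eq_intros H_deriv)
    have "t^m * H' y t = t^(m-1) * (t * H' y t)"
    proof -
      obtain k where "m = Suc k" using assms(2) by (cases m) auto
      then show ?thesis by (simp add: power_Suc2 algebra_simps)
    qed
    also have "\<dots> = - (real m * t^(m-1)) * H y t" using H_rel assms(1) by simp
    finally show ?thesis using d by simp
  qed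
  then have "u 1 = u 0" by (rule DERIV_isconst_all[rule_format])
  then show ?thesis using assms(2) by (simp add: u_def H1 H0)
qed

lemma zero_case:
  assumes "c = 0"
  shows "g y = g 0"
proof -
  have "H y 1 = H y 0"
  proof (rule DERIV_isconst_end[of 0 1 "H y"])
    show "continuous_on {0..1} (H y)" by (rule H_cont)
    fix t :: real assume "0 < t" "t < 1"
    then have "H' y t = 0" using H_rel[of t y] assms by simp
    then show "DERIV (H y) t :> 0" using H_deriv by metis
  qed simp
  then show ?thesis by (simp add: H1 H0)
qed

lemma one_case:
  assumes "c = 1"
  shows "g y = (\<Sum>b\<in>UNIV. y$b * pdiff b g 0)"
proof -
  have g0: "g 0 = 0" using E[of 0] assms by simp
  have lin: "H y t = t * H y 1" if "0 < t" "t < 1" for t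
  proof -
    define u where "u s = H y s / s" for s
    have "u 1 = u t"
    proof (rule DERIV_isconst_end[of t 1 u])
      show "t < 1" by fact
      have "continuous_on {t..1} (\<lambda>s. H y s / s)"
        using that by (intro continuous_intros H_cont) auto
      then show "continuous_on {t..1} u" by (simp add: u_def[abs_def])
      fix s :: real assume s: "t < s" "s < 1"
      then have "s \<noteq> 0" using that by simp
      have "DERIV u s :> (H' y s * s - H y s * 1) / (s * s)"
        unfolding u_def[abs_def] using \<open>s \<noteq> 0\<close>
        by (intro derivative_eq_intros H_deriv) (auto intro: H_deriv)
      moreover have "H' y s * s - H y s * 1 = 0" using H_rel[of s y] assms by (simp add: algebra_simps)
      ultimately show "DERIV u s :> 0" by simp
    qed
    then show ?thesis using that by (simp add: u_def field_simps)
  qed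
  have D: "((\<lambda>s. (H y s - H y 0) / (s - 0)) \<longlongrightarrow> H' y 0) (at_right 0)"
    using has_field_derivative_at_within[OF H_deriv[of y 0], of "{0<..}"]
    unfolding has_field_derivative_iff by simp
  have ev: "eventually (\<lambda>s. (H y s - H y 0) / (s - 0) = H y 1) (at_right (0::real))"
    unfolding eventually_at_right_field
    by (intro exI[of _ 1]) (auto simp: lin H0 g0)
  have "((\<lambda>s. H y 1) \<longlongrightarrow> H' y 0) (at_right (0::real))"
    by (rule tendsto_cong[OF ev, THEN iffD1, OF D])
  then have "H y 1 = H' y 0" using tendsto_const_iff[OF trivial_limit_at_right_real] by blast
  then show ?thesis by (simp add: H1 H'_def)
qed

end



lemma mulxi_dxi:
  assumes v: "valid_mi N dg al" and b: "b < N"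
  shows "mul_xi N dg b (d_xi N dg b f) al x = real (al b) * f al x"
proof (cases "al b = 0")
  case True
  then show ?thesis by (simp add: mul_xi_def)
next
  case False
  define alp where "alp = (\<lambda>g. al g - unit_mi b g)"
  have vp: "valid_mi N dg alp" using v unfolding valid_mi_def alp_def
    by (metis diff_le_self le_trans le_zero_eq)
  have bk: "(\<lambda>g. alp g + unit_mi b g) = al"
    using False by (auto simp: alp_def unit_mi_def fun_eq_iff)
  have ab: "alp b + 1 = al b" using False by (simp add: alp_def unit_mi_def)
  have sq: "msign dg b alp * msign dg b alp = 1"
    unfolding msign_def power_mult_distrib[symmetric] by simp
  have "mul_xi N dg b (d_xi N dg b f) al x = msign dg b alp * d_xi N dg b f alp x"
    using False v b by (simp add: mul_xi_def alp_def)
  also have "\<dots> = msign dg b alp * (msign dg b alp * real (alp b + 1) * f al x)"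
    using vp b v bk by (simp add: d_xi_def)
  also have "\<dots> = real (al b) * f al x" using sq ab
    by (metis mult.assoc mult_1 of_nat_1)
  finally show ?thesis .
qed

lemma euler_coeff:
  assumes v: "valid_mi N dg al"
  shows "euler N dg f al x = (\<Sum>a\<in>UNIV. x$a * pdiff a (f al) x) + real (\<Sum>b<N. al b) * f al x"
proof -
  have "(\<Sum>b<N. mul_xi N dg b (d_xi N dg b f) al x) = (\<Sum>b<N. real (al b) * f al x)"
    by (rule sum.cong) (auto simp: mulxi_dxi[OF v])
  then show ?thesis unfolding euler_def mul_x_def d_x_def by (simp add: sum_distrib_right)
qed

lemma unit_ne0[simp]: "((\<lambda>_. 0::nat) = unit_mi b) = False"
  by (auto simp: unit_mi_def fun_eq_iff)

lemma unit_inj[simp]: "(unit_mi b = unit_mi b') = (b = b')"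
  by (auto simp: unit_mi_def fun_eq_iff)

lemma valid0: "valid_mi N dg (\<lambda>_. 0)" by (simp add: valid_mi_def)

lemma valid_unit: "b < N \<Longrightarrow> valid_mi N dg (unit_mi b)" by (simp add: valid_mi_def unit_mi_def)

lemma sum_unit: "b < N \<Longrightarrow> (\<Sum>g<N. unit_mi b g) = 1"
  by (simp add: unit_mi_def)

lemma sum_ge2:
  assumes v: "valid_mi N dg al" and n0: "al \<noteq> (\<lambda>_. 0)" and nu: "\<forall>b<N. al \<noteq> unit_mi b"
  shows "(\<Sum>g<N. al g) \<ge> 2"
proof (rule ccontr)
  assume "\<not> ?thesis"
  then have "(\<Sum>g<N. al g) = 0 \<or> (\<Sum>g<N. al g) = 1" by linarith
  then show False
  proof
    assume "(\<Sum>g<N. al g) = 0"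
    then have "\<forall>g<N. al g = 0" by simp
    then have "al = (\<lambda>_. 0)" using v by (auto simp: valid_mi_def fun_eq_iff not_less[symmetric])
    then show False using n0 by simp
  next
    assume s1: "(\<Sum>g<N. al g) = 1"
    then obtain b where b: "b < N" "al b \<noteq> 0" by (metis lessThan_iff sum.neutral zero_neq_one)
    have leb: "al g \<le> 1" if "g < N" for g
      using member_le_sum[of g "{..<N}" al] that s1 by simp
    have "al g = 0" if "g < N" "g \<noteq> b" for g
    proof -
      have "al b + al g = sum al {b, g}" using that by simp
      also have "\<dots> \<le> sum al {..<N}" using that b by (intro sum_mono2) auto
      finally show ?thesis using s1 b by simp
    qed
    note z = this
    have "al g = unit_mi b g" for g
    proof (cases "g = b")
      case True
      then show ?thesis using leb[OF b(1)] b(2) by (simp add: unit_mi_def)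
    next
      case False
      show ?thesis
      proof (cases "g < N")
        case True then show ?thesis using z False by (simp add: unit_mi_def)
      next
        case c: False then show ?thesis using v False by (simp add: unit_mi_def valid_mi_def)
      qed
    qed
    then have "al = unit_mi b" by blast
    then show False using nu b by simp
  qed
qed



lemma coeff_pde:
  assumes isf: "is_fun N dg f" and eu: "euler N dg f = f" and v: "valid_mi N dg al"
  shows "euler_pde (f al) (1 - real (\<Sum>b<N. al b))"
proof
  have sm: "smooth_fn (f al)" using isf v unfolding is_fun_def by metis
  show "(\<lambda>t. f al (y + t *\<^sub>R axis a 1)) differentiable (at 0)" for a y
    using sm unfolding smooth_fn_def by (metis pdiffs.simps(1))
  show "continuous_on UNIV (pdiff a (f al))" for a
    using sm unfolding smooth_fn_def by (metis pdiffs.simps)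
  show "(\<Sum>b\<in>UNIV. y$b * pdiff b (f al) y) = (1 - real (\<Sum>b<N. al b)) * f al y" for y
  proof -
    have "euler N dg f al y = f al y" using eu by simp
    then show ?thesis using euler_coeff[OF v, of f y] by (simp add: algebra_simps)
  qed
qed

theorem proposition4p4:
  fixes n N :: nat and dg :: "nat \<Rightarrow> nat set" and f :: "'p::finite sfun"
  assumes "n \<ge> 1"
    and "\<And>b. b < N \<Longrightarrow> dg b \<subseteq> {..<n} \<and> dg b \<noteq> {}"
    and "is_fun N dg f"
    and "euler N dg f = f"
  shows "\<exists>F :: 'p \<Rightarrow> real. \<exists>G :: nat \<Rightarrow> real.
           f = (\<lambda>al x. (\<Sum>a\<in>UNIV. F a * coord_x a al x) + (\<Sum>b<N. G b * coord_xi b al x))"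
proof (intro exI ext)
  fix al :: "nat \<Rightarrow> nat" and x :: "real^'p"
  note isf = assms(3) and eu = assms(4)
  show "f al x = (\<Sum>a\<in>UNIV. pdiff a (f (\<lambda>_. 0)) 0 * coord_x a al x)
                 + (\<Sum>b<N. f (unit_mi b) 0 * coord_xi b al x)"
  proof (cases "al = (\<lambda>_. 0)")
    case True
    interpret euler_pde "f al" 1
      using coeff_pde[OF isf eu valid0] True by simp
    show ?thesis using one_case[of x] True by (simp add: coord_x_def coord_xi_def mult.commute)
  next
    case n0: False
    show ?thesis
    proof (cases "\<exists>b<N. al = unit_mi b")
      case True
      then obtain b where b: "b < N" "al = unit_mi b" by blast
      interpret euler_pde "f al" 0
        using coeff_pde[OF isf eu valid_unit[OF b(1)]] b sum_unit[OF b(1)] by simp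
      have "(\<Sum>b'<N. f (unit_mi b') 0 * coord_xi b' al x) = f (unit_mi b) 0"
        using b by (simp add: coord_xi_def eq_commute[of b] if_distrib sum.delta cong: if_cong)
      then show ?thesis using zero_case[of x] n0 b by (simp add: coord_x_def)
    next
      case nu: False
      have rhs: "(\<Sum>a\<in>UNIV. pdiff a (f (\<lambda>_. 0)) 0 * coord_x a al x)
                 + (\<Sum>b<N. f (unit_mi b) 0 * coord_xi b al x) = 0"
        using n0 nu by (auto simp: coord_x_def coord_xi_def intro!: sum.neutral)
      show ?thesis
      proof (cases "valid_mi N dg al")
        case v: True
        define m where "m = (\<Sum>b<N. al b) - 1"
        have k2: "(\<Sum>b<N. al b) \<ge> 2" using sum_ge2[OF v n0] nu by blast
        then have "1 - real (\<Sum>b<N. al b) = - real m" "m \<ge> 1" by (auto simp: m_def of_nat_diff)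
        then interpret euler_pde "f al" "- real m"
          using coeff_pde[OF isf eu v] by simp
        show ?thesis using neg_case[OF refl \<open>m \<ge> 1\<close>] rhs by simp
      next
        case False
        then have "f al = (\<lambda>x. 0)" using isf unfolding is_fun_def by metis
        then show ?thesis using rhs by simp
      qed
    qed
  qed
qed


end
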